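(* Let $|\Psi^{\mathrm h}_0\rangle$ and $|\Psi^{\mathrm c}_0\rangle$ be two initial states with $p^{\mathrm h}_0(0)>0$ and $p^{\mathrm c}_0(0)>0$, and suppose $|\Psi^{\mathrm h}_0\rangle$ is hotter than $|\Psi^{\mathrm c}_0\rangle$ with respect to $D_f$, i.e. $D_f^{\mathrm h}(0)>D_f^{\mathrm c}(0)$. Let $i\in\{1,\dots,n-1\}$ be the smallest index such that $\frac{p^{\mathrm h}_i(0)}{p^{\mathrm h}_0(0)}\neq\frac{p^{\mathrm c}_i(0)}{p^{\mathrm c}_0(0)}$ (such an index exists under the hypotheses). Then the Mpemba effect occurs for this pair (with respect to $D_f$) if and only if $$\frac{p^{\mathrm h}_i(0)}{p^{\mathrm h}_0(0)}<\frac{p^{\mathrm c}_i(0)}{p^{\mathrm c}_0(0)}.$$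
   Context: Let $H$ be a Hamiltonian on an $n$-dimensional Hilbert space with nondegenerate eigenvalues $0=E_0<E_1<\dots<E_{n-1}$ and orthonormal eigenvectors $|E_0\rangle,\dots,|E_{n-1}\rangle$. For a pure initial state $|\Psi_0\rangle$ and real $\tau$, quantum imaginary-time evolution (QITE) is $|\Psi(\tau)\rangle=e^{-H\tau}|\Psi_0\rangle/\sqrt{\langle\Psi_0|e^{-2H\tau}|\Psi_0\rangle}$. The populations are $p_i(\tau)=|\langle E_i|\Psi(\tau)\rangle|^2$, so that $p_i(\tau)=p_i(0)e^{-2E_i\tau}/\sum_{j=0}^{n-1}p_j(0)e^{-2E_j\tau}$. Fix a nondecreasing function $f:\mathbb R\to\mathbb R$ with $f(E_1)>f(E_0)=0$, and define the distance to the ground state $D_f(\tau)=\sum_{i=0}^{n-1}p_i(\tau)f(E_i)$. Superscripts $\mathrm h$ and $\mathrm c$ denote quantities for the QITE trajectories starting from $|\Psi^{\mathrm h}_0\rangle$ and $|\Psi^{\mathrm c}_0\rangle$ respectively. Given $D_f^{\mathrm h}(0)>D_f^{\mathrm c}(0)$, the Mpemba effect occurs if there exists $\tau^\star>0$ such that $D_f^{\mathrm h}(\tau)<D_f^{\mathrm c}(\tau)$ for all $\tau>\tau^\star$. *)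

theory Defs
  imports Complex_Main
begin

text \<open>A pure state is represented by its coordinates (amplitudes) in the orthonormal
  eigenbasis of H: psi i = <E_i|Psi_0>, for i < n.  The Hamiltonian is diagonal in this
  basis with eigenvalues E 0 < E 1 < ... < E (n-1).\<close>

definition qite_norm :: "nat \<Rightarrow> (nat \<Rightarrow> real) \<Rightarrow> (nat \<Rightarrow> complex) \<Rightarrow> real \<Rightarrow> real" where
  "qite_norm n E psi \<tau> = sqrt (\<Sum>j<n. exp (-2 * E j * \<tau>) * (cmod (psi j))\<^sup>2)"

text \<open>Amplitudes of the QITE state e^{-H tau}|Psi_0> / sqrt(<Psi_0|e^{-2 H tau}|Psi_0>).\<close>
definition qite :: "nat \<Rightarrow> (nat \<Rightarrow> real) \<Rightarrow> (nat \<Rightarrow> complex) \<Rightarrow> real \<Rightarrow> nat \<Rightarrow> complex" where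
  "qite n E psi \<tau> i = complex_of_real (exp (- E i * \<tau>) / qite_norm n E psi \<tau>) * psi i"

definition pop :: "nat \<Rightarrow> (nat \<Rightarrow> real) \<Rightarrow> (nat \<Rightarrow> complex) \<Rightarrow> real \<Rightarrow> nat \<Rightarrow> real" where
  "pop n E psi \<tau> i = (cmod (qite n E psi \<tau> i))\<^sup>2"

definition Dist :: "nat \<Rightarrow> (nat \<Rightarrow> real) \<Rightarrow> (real \<Rightarrow> real) \<Rightarrow> (nat \<Rightarrow> complex) \<Rightarrow> real \<Rightarrow> real" where
  "Dist n E f psi \<tau> = (\<Sum>i<n. pop n E psi \<tau> i * f (E i))"

definition mpemba :: "nat \<Rightarrow> (nat \<Rightarrow> real) \<Rightarrow> (real \<Rightarrow> real) \<Rightarrow> (nat \<Rightarrow> complex) \<Rightarrow> (nat \<Rightarrow> complex) \<Rightarrow> bool" where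
  "mpemba n E f psih psic \<longleftrightarrow>
     (\<exists>\<tau>s>0. \<forall>\<tau>>\<tau>s. Dist n E f psih \<tau> < Dist n E f psic \<tau>)"

end

theory Submission
  imports Defs
begin

lemma exp_decay:
  fixes d :: real
  assumes "d > 0"
  shows "((\<lambda>t. exp (-2*d*t)) \<longlongrightarrow> 0) at_top"
proof -
  have "LIM t at_top. (-2*d) * t :> at_bot"
    by (rule filterlim_tendsto_neg_mult_at_bot[OF tendsto_const _ filterlim_ident]) (use assms in simp)
  then show ?thesis by (rule filterlim_compose[OF exp_at_bot])
qed

lemma Z_pos:
  fixes n :: nat and psi :: "nat \<Rightarrow> complex"
  assumes "0 < n" "(cmod (psi 0))\<^sup>2 > 0"
  shows "(\<Sum>j<n. exp (-2 * E j * t) * (cmod (psi j))\<^sup>2) > 0"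
proof -
  have "exp (-2 * E 0 * t) * (cmod (psi 0))\<^sup>2 \<le> (\<Sum>j<n. exp (-2 * E j * t) * (cmod (psi j))\<^sup>2)"
    by (rule member_le_sum) (auto simp: assms)
  moreover have "exp (-2 * E 0 * t) * (cmod (psi 0))\<^sup>2 > 0" using assms by simp
  ultimately show ?thesis by linarith
qed

lemma pop_eq:
  "pop n E psi t i = exp (-2 * E i * t) * (cmod (psi i))\<^sup>2 / (\<Sum>j<n. exp (-2 * E j * t) * (cmod (psi j))\<^sup>2)"
proof -
  let ?Z = "(\<Sum>j<n. exp (-2 * E j * t) * (cmod (psi j))\<^sup>2)"
  have Z: "?Z \<ge> 0" by (intro sum_nonneg) simp
  have e: "(exp (- E i * t))\<^sup>2 = exp (-2 * E i * t)"
    by (simp add: power2_eq_square exp_add[symmetric])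
  have "pop n E psi t i = (exp (- E i * t) / sqrt ?Z)\<^sup>2 * (cmod (psi i))\<^sup>2"
    unfolding pop_def qite_def qite_norm_def by (simp add: norm_mult norm_divide power_mult_distrib power_divide)
  also have "\<dots> = exp (-2 * E i * t) * (cmod (psi i))\<^sup>2 / ?Z"
    using Z e by (simp add: power_divide)
  finally show ?thesis .
qed

lemma Dist_eq:
  "Dist n E f psi t = (\<Sum>i<n. exp (-2 * E i * t) * (cmod (psi i))\<^sup>2 * f (E i)) / (\<Sum>j<n. exp (-2 * E j * t) * (cmod (psi j))\<^sup>2)"
  unfolding Dist_def pop_eq sum_divide_distrib by (rule sum.cong) auto

theorem theorem1:
  fixes n :: nat and E :: "nat \<Rightarrow> real" and f :: "real \<Rightarrow> real"
    and psih psic :: "nat \<Rightarrow> complex"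
  assumes n2: "n \<ge> 2"
    and E0: "E 0 = 0"
    and Emono: "\<And>i j. i < j \<Longrightarrow> j < n \<Longrightarrow> E i < E j"
    and fmono: "mono f"
    and f0: "f (E 0) = 0"
    and f1: "f (E 1) > f (E 0)"
    and normh: "(\<Sum>i<n. (cmod (psih i))\<^sup>2) = 1"
    and normc: "(\<Sum>i<n. (cmod (psic i))\<^sup>2) = 1"
    and ph0: "pop n E psih 0 0 > 0"
    and pc0: "pop n E psic 0 0 > 0"
    and hotter: "Dist n E f psih 0 > Dist n E f psic 0"
  shows "(\<exists>i. 1 \<le> i \<and> i < n \<and>
            pop n E psih 0 i / pop n E psih 0 0 \<noteq> pop n E psic 0 i / pop n E psic 0 0)
       \<and> (mpemba n E f psih psic \<longleftrightarrow>
            (let i = (LEAST i. 1 \<le> i \<and> i < n \<and>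
                        pop n E psih 0 i / pop n E psih 0 0 \<noteq> pop n E psic 0 i / pop n E psic 0 0)
             in pop n E psih 0 i / pop n E psih 0 0 < pop n E psic 0 i / pop n E psic 0 0))"
proof -
  define ah where "ah i = (cmod (psih i))\<^sup>2" for i
  define ac where "ac i = (cmod (psic i))\<^sup>2" for i
  define Zh where "Zh t = (\<Sum>j<n. exp (-2 * E j * t) * ah j)" for t
  define Zc where "Zc t = (\<Sum>j<n. exp (-2 * E j * t) * ac j)" for t
  define Nh where "Nh t = (\<Sum>j<n. exp (-2 * E j * t) * ah j * f (E j))" for t
  define Nc where "Nc t = (\<Sum>j<n. exp (-2 * E j * t) * ac j * f (E j))" for t
  have n0: "0 < n" using n2 by simp
  have popeqh: "pop n E psih 0 i = ah i" for i
    using normh unfolding pop_eq ah_def by simp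
  have popeqc: "pop n E psic 0 i = ac i" for i
    using normc unfolding pop_eq ac_def by simp
  have ah0: "ah 0 > 0" using ph0 popeqh by simp
  have ac0: "ac 0 > 0" using pc0 popeqc by simp
  have Zhpos: "Zh t > 0" for t unfolding Zh_def ah_def by (rule Z_pos[OF n0]) (use ah0 ah_def in simp)
  have Zcpos: "Zc t > 0" for t unfolding Zc_def ac_def by (rule Z_pos[OF n0]) (use ac0 ac_def in simp)
  have Dh: "Dist n E f psih t = Nh t / Zh t" for t unfolding Dist_eq Nh_def Zh_def ah_def ..
  have Dc: "Dist n E f psic t = Nc t / Zc t" for t unfolding Dist_eq Nc_def Zc_def ac_def ..
  define c where "c i j = f (E i) * (ac i * ah j - ah i * ac j)" for i j
  have G: "Nc t * Zh t - Nh t * Zc t = (\<Sum>i<n. \<Sum>j<n. exp (-2 * E i * t) * exp (-2 * E j * t) * c i j)" for t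
  proof -
    have "Nc t * Zh t - Nh t * Zc t =
      (\<Sum>i<n. \<Sum>j<n. (exp (-2 * E i * t) * ac i * f (E i)) * (exp (-2 * E j * t) * ah j))
      - (\<Sum>i<n. \<Sum>j<n. (exp (-2 * E i * t) * ah i * f (E i)) * (exp (-2 * E j * t) * ac j))"
      unfolding Nc_def Zh_def Nh_def Zc_def sum_product ..
    also have "\<dots> = (\<Sum>i<n. \<Sum>j<n. exp (-2 * E i * t) * exp (-2 * E j * t) * c i j)"
      unfolding sum_subtractf[symmetric] by (intro sum.cong refl) (simp add: c_def algebra_simps)
    finally show ?thesis .
  qed
  have Dlt: "Dist n E f psih t < Dist n E f psic t \<longleftrightarrow> Nh t * Zc t < Nc t * Zh t" for t
    unfolding Dh Dc using Zhpos[of t] Zcpos[of t] by (simp add: divide_simps)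
  define P where "P i = (1 \<le> i \<and> i < n \<and> ah i / ah 0 \<noteq> ac i / ac 0)" for i
  have ex: "\<exists>i. P i"
  proof (rule ccontr)
    assume "\<not> (\<exists>i. P i)"
    then have eq: "ac i = ac 0 / ah 0 * ah i" if "i < n" for i
      using that ah0 ac0 unfolding P_def
      by (cases "i = 0") (auto simp: field_simps)
    have "c i j = 0" if "i < n" "j < n" for i j
      unfolding c_def using eq[OF that(1)] eq[OF that(2)] by simp
    then have "Nc 0 * Zh 0 - Nh 0 * Zc 0 = 0" unfolding G by simp
    then have "Nh 0 / Zh 0 = Nc 0 / Zc 0" using Zhpos[of 0] Zcpos[of 0] by (simp add: divide_simps)
    then show False using hotter Dh[of 0] Dc[of 0] by linarith
  qed
  define k where "k = (LEAST i. P i)"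
  have Pk: "P k" unfolding k_def using ex by (metis LeastI_ex)
  have below: "ac i = ac 0 / ah 0 * ah i" if "i < k" for i
  proof -
    have "\<not> P i" using that unfolding k_def by (rule not_less_Least)
    moreover have "i < n" using that Pk P_def by auto
    ultimately show ?thesis using ah0 ac0 unfolding P_def
      by (cases "i = 0") (auto simp: field_simps)
  qed
  have c0: "c i j = 0" if "i < k" "j < k" for i j
    unfolding c_def using below[OF that(1)] below[OF that(2)] by simp
  have kn: "k < n" "1 \<le> k" using Pk P_def by auto
  have Epos: "E j > 0" if "0 < j" "j < n" for j using Emono[OF that] E0 by simp
  have Enn: "E j \<ge> 0" if "j < n" for j using Epos[of j] that E0 by (cases "j = 0") auto
  define T where "T t = (\<Sum>i<n. \<Sum>j<n. c i j * exp (-2 * (E i + E j - E k) * t))" for t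
  have GT: "Nc t * Zh t - Nh t * Zc t = exp (-2 * E k * t) * T t" for t
    unfolding G T_def sum_distrib_left
    by (intro sum.cong refl) (simp add: exp_add[symmetric] algebra_simps)
  have DT: "Dist n E f psih t < Dist n E f psic t \<longleftrightarrow> T t > 0" for t
  proof -
    have "Nh t * Zc t < Nc t * Zh t \<longleftrightarrow> 0 < exp (-2 * E k * t) * T t" using GT[of t] by linarith
    also have "\<dots> \<longleftrightarrow> T t > 0" by (simp add: zero_less_mult_iff)
    finally show ?thesis using Dlt by simp
  qed
  define C where "C = c k 0"
  have term_lim: "((\<lambda>t. c i j * exp (-2 * (E i + E j - E k) * t)) \<longlongrightarrow> (if i = k \<and> j = 0 then C else 0)) at_top"
    if "i < n" "j < n" for i j
  proof (cases "i = k \<and> j = 0")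
    case True then show ?thesis using E0 by (simp add: C_def)
  next
    case False
    show ?thesis
    proof (cases "c i j = 0")
      case True then show ?thesis using False by auto
    next
      case cne: False
      have i0: "i \<noteq> 0"
      proof
        assume "i = 0" then show False using cne f0 unfolding c_def by simp
      qed
      have "E i + E j - E k > 0"
      proof (cases "k \<le> i")
        case True
        show ?thesis
        proof (cases "i = k")
          case True
          then have "j \<noteq> 0" using False by simp
          then show ?thesis using Epos[of j] that True by simp
        next
          case False
          then have "E k < E i" using Emono[of k i] True that by simp
          then show ?thesis using Enn[OF that(2)] by simp
        qed
      next
        case False
        then have "\<not> j < k" using c0 cne by force
        then have "E k \<le> E j" using Emono[of k j] that by (cases "k = j") auto
        then show ?thesis using Epos[of i] i0 that by simp
      qed
      then have "((\<lambda>t. exp (-2 * (E i + E j - E k) * t)) \<longlongrightarrow> 0) at_top" by (rule exp_decay)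
      then have "((\<lambda>t. c i j * exp (-2 * (E i + E j - E k) * t)) \<longlongrightarrow> c i j * 0) at_top"
        by (intro tendsto_mult tendsto_const)
      then show ?thesis using False by (simp only: if_False mult_zero_right)
    qed
  qed
  have "(T \<longlongrightarrow> (\<Sum>i<n. \<Sum>j<n. (if i = k \<and> j = 0 then C else 0))) at_top"
    unfolding T_def[abs_def] by (intro tendsto_sum term_lim) auto
  moreover have "(\<Sum>i<n. \<Sum>j<n. (if i = k \<and> j = 0 then C else 0)) = C"
  proof -
    have "(\<Sum>i<n. \<Sum>j<n. (if i = k \<and> j = 0 then C else 0)) = (\<Sum>i<n. if i = k then C else 0)"
      by (intro sum.cong refl) (use n0 in auto)
    also have "\<dots> = C" using kn by simp
    finally show ?thesis .
  qed
  ultimately have Tlim: "(T \<longlongrightarrow> C) at_top" by simp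
  have fk: "f (E k) > 0"
  proof -
    have "E 1 \<le> E k" using Emono[of 1 k] kn by (cases "k = 1") auto
    then have "f (E 1) \<le> f (E k)" using fmono by (simp add: mono_def)
    then show ?thesis using f1 f0 by simp
  qed
  have Csign: "C > 0 \<longleftrightarrow> ah k / ah 0 < ac k / ac 0"
  proof -
    have "C > 0 \<longleftrightarrow> ah k * ac 0 < ac k * ah 0"
      unfolding C_def c_def using fk by (simp add: zero_less_mult_iff)
    also have "\<dots> \<longleftrightarrow> ah k / ah 0 < ac k / ac 0" using ah0 ac0 by (simp add: divide_simps)
    finally show ?thesis .
  qed
  have Cne: "C \<noteq> 0"
  proof
    assume "C = 0"
    then have "ah k * ac 0 = ac k * ah 0" unfolding C_def c_def using fk by simp
    then have "ah k / ah 0 = ac k / ac 0" using ah0 ac0 by (simp add: divide_simps)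
    then show False using Pk P_def by simp
  qed
  have mp: "mpemba n E f psih psic \<longleftrightarrow> C > 0"
  proof
    assume m: "mpemba n E f psih psic"
    show "C > 0"
    proof (rule ccontr)
      assume "\<not> C > 0"
      then have "C < 0" using Cne by simp
      then have "eventually (\<lambda>t. T t < 0) at_top" using Tlim by (simp add: order_tendstoD)
      then obtain N where N: "\<And>t. t \<ge> N \<Longrightarrow> T t < 0" by (auto simp: eventually_at_top_linorder)
      obtain ts where ts: "ts > 0" "\<And>t. t > ts \<Longrightarrow> Dist n E f psih t < Dist n E f psic t"
        using m unfolding mpemba_def by blast
      have "T (max N ts + 1) > 0" using ts(2)[of "max N ts + 1"] DT by simp
      moreover have "T (max N ts + 1) < 0" by (rule N) simp
      ultimately show False by simp
    qed
  next
    assume "C > 0"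
    then have "eventually (\<lambda>t. T t > 0) at_top" using Tlim by (simp add: order_tendstoD)
    then obtain N where N: "\<And>t. t \<ge> N \<Longrightarrow> T t > 0" by (auto simp: eventually_at_top_linorder)
    show "mpemba n E f psih psic"
      unfolding mpemba_def
    proof (intro exI[of _ "max N 1"] conjI allI impI)
      fix t :: real assume "t > max N 1"
      then show "Dist n E f psih t < Dist n E f psic t" using N[of t] DT by simp
    qed simp
  qed
  have kk: "(LEAST i. 1 \<le> i \<and> i < n \<and> ah i / ah 0 \<noteq> ac i / ac 0) = k"
    unfolding k_def P_def ..
  have ex2: "\<exists>i. 1 \<le> i \<and> i < n \<and> ah i / ah 0 \<noteq> ac i / ac 0" using ex P_def by auto
  show ?thesis
    unfolding Let_def popeqh popeqc kk
    using ex2 mp Csign by simp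
qed

end
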